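(* Let $\beta$ be a $\tau$-invariant subset of $\alpha$. If two étale words over $\beta$ are homotopic in the class of étale words over $\alpha$, then they are homotopic in the class of étale words over $\beta$.
   Context: Fix a set $\alpha$ with an involution $\tau$; a $\tau$-invariant subset $\beta\subset\alpha$ carries the restricted involution. For a set $\gamma$ with involution $\tau$: a $\gamma$-alphabet is a set $\mathcal A$ with a map $A\mapsto|A|\in\gamma$; an étale word over $\gamma$ is a pair $(\mathcal A,w)$ with $\mathcal A$ a $\gamma$-alphabet and $w$ a finite word in letters of $\mathcal A$; an étale word over $\beta$ is regarded as an étale word over $\alpha$ via the inclusion $\beta\subset\alpha$. A nanoword is an étale word with $\mathcal A$ finite and each letter occurring exactly twice; nanowords are isomorphic if a bijection of alphabets preserving $|\cdot|$ carries one word letterwise to the other. Homotopy moves on nanowords over $\gamma$ ($x,y,z,t$ words in the remaining letters): (1) $(\mathcal A,xAAy)\mapsto(\mathcal A\setminus\{A\},xy)$; (2) $(\mathcal A,xAByBAz)\mapsto(\mathcal A\setminus\{A,B\},xyz)$ if $|B|=\tau(|A|)$; (3) $(\mathcal A,xAByACzBCt)\mapsto(\mathcal A,xBAyCAzCBt)$ if $A,B,C$ distinct with $|A|=|B|=|C|$. Homotopy of nanowords over $\gamma$ is generated by isomorphisms, these moves and their inverses (with all intermediate nanowords over $\gamma$). Desingularization: for an étale word $(\mathcal A,w)$ with $m_w(A)$ the number of occurrences of $A$, let $\mathcal A^d=\{A_{i,j}:1\le i<j\le m_w(A)\}$, $|A_{i,j}|=|A|$, and $w^d$ obtained from $w$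 by deleting letters of multiplicity 1 and replacing the $i$-th occurrence of $A$ ($m=m_w(A)\ge2$) by $A_{1,i}\cdots A_{i-1,i}A_{i,i+1}\cdots A_{i,m}$. Two étale words over $\gamma$ are homotopic over $\gamma$ if their desingularizations are homotopic nanowords over $\gamma$. *)

theory Defs
  imports Main
begin

text \<open>An etale word is a triple (A, lab, w): an alphabet A (a set of letters of type 'l),
  a labelling map lab : A -> gamma (values outside A are irrelevant), and a finite word w
  in the letters of A.\<close>

type_synonym ('l, 'a) etale = "'l set \<times> ('l \<Rightarrow> 'a) \<times> 'l list"

definition involution_on :: "'a set \<Rightarrow> ('a \<Rightarrow> 'a) \<Rightarrow> bool" where
  "involution_on X t \<longleftrightarrow> (\<forall>x\<in>X. t x \<in> X \<and> t (t x) = x)"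

definition etale_word_over :: "'a set \<Rightarrow> ('l, 'a) etale \<Rightarrow> bool" where
  "etale_word_over \<gamma> E \<longleftrightarrow>
     (case E of (A, lab, w) \<Rightarrow> lab ` A \<subseteq> \<gamma> \<and> set w \<subseteq> A)"

definition nanoword_over :: "'a set \<Rightarrow> ('l, 'a) etale \<Rightarrow> bool" where
  "nanoword_over \<gamma> E \<longleftrightarrow> etale_word_over \<gamma> E \<and>
     (case E of (A, lab, w) \<Rightarrow> finite A \<and> (\<forall>a\<in>A. count_list w a = 2))"

definition nano_iso :: "('l, 'a) etale \<Rightarrow> ('l, 'a) etale \<Rightarrow> bool" where
  "nano_iso E E' \<longleftrightarrow>
     (case E of (A, lab, w) \<Rightarrow> case E' of (A', lab', w') \<Rightarrow>
       (\<exists>f. bij_betw f A A' \<and> (\<forall>a\<in>A. lab' (f a) = lab a) \<and> w' = map f w))"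

inductive nano_move :: "('a \<Rightarrow> 'a) \<Rightarrow> ('l, 'a) etale \<Rightarrow> ('l, 'a) etale \<Rightarrow> bool"
  for t :: "'a \<Rightarrow> 'a" where
  move1: "nano_move t (A, lab, x @ [a, a] @ y) (A - {a}, lab, x @ y)"
| move2: "a \<noteq> b \<Longrightarrow> lab b = t (lab a) \<Longrightarrow>
          nano_move t (A, lab, x @ [a, b] @ y @ [b, a] @ z) (A - {a, b}, lab, x @ y @ z)"
| move3: "distinct [a, b, c] \<Longrightarrow> lab a = lab b \<Longrightarrow> lab b = lab c \<Longrightarrow>
          nano_move t (A, lab, x @ [a, b] @ y @ [a, c] @ z @ [b, c] @ u)
                      (A, lab, x @ [b, a] @ y @ [c, a] @ z @ [c, b] @ u)"

definition nano_step :: "('a \<Rightarrow> 'a) \<Rightarrow> 'a set \<Rightarrow> ('l, 'a) etale \<Rightarrow> ('l, 'a) etale \<Rightarrow> bool" where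
  "nano_step t \<gamma> E E' \<longleftrightarrow> nanoword_over \<gamma> E \<and> nanoword_over \<gamma> E' \<and>
     (nano_iso E E' \<or> nano_move t E E' \<or> nano_move t E' E)"

definition nano_homotopic :: "('a \<Rightarrow> 'a) \<Rightarrow> 'a set \<Rightarrow> ('l, 'a) etale \<Rightarrow> ('l, 'a) etale \<Rightarrow> bool" where
  "nano_homotopic t \<gamma> = (nano_step t \<gamma>)\<^sup>*\<^sup>*"

text \<open>The letter A_{i,j} is represented as (A, i, j).
  The k-th position (0-based) of w carries letter a = w!k, which is its i-th occurrence
  with i = (number of a's before position k) + 1.\<close>
definition desing_word :: "'l list \<Rightarrow> ('l \<times> nat \<times> nat) list" where
  "desing_word w = concat (map (\<lambda>k.
      let a = w ! k; i = count_list (take k w) a + 1; m = count_list w a in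
      if m \<ge> 2 then map (\<lambda>h. (a, h, i)) [1..<i] @ map (\<lambda>h. (a, i, h)) [Suc i..<Suc m]
      else []) [0..<length w])"

definition desing :: "('l, 'a) etale \<Rightarrow> ('l \<times> nat \<times> nat, 'a) etale" where
  "desing E = (case E of (A, lab, w) \<Rightarrow>
     ({(a, i, j) | a i j. a \<in> A \<and> 1 \<le> i \<and> i < j \<and> j \<le> count_list w a},
      (\<lambda>(a, i, j). lab a),
      desing_word w))"

definition etale_homotopic :: "('a \<Rightarrow> 'a) \<Rightarrow> 'a set \<Rightarrow> ('l, 'a) etale \<Rightarrow> ('l, 'a) etale \<Rightarrow> bool" where
  "etale_homotopic t \<gamma> E E' \<longleftrightarrow> nano_homotopic t \<gamma> (desing E) (desing E')"

end

theory Submission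
  imports Defs
begin

definition proj :: "'a set \<Rightarrow> ('l, 'a) etale \<Rightarrow> ('l, 'a) etale" where
  "proj \<beta> E = (case E of (A, lab, w) \<Rightarrow>
     (A \<inter> {a. lab a \<in> \<beta>}, lab, filter (\<lambda>a. lab a \<in> \<beta>) w))"

lemma proj_move:
  assumes inv: "involution_on \<alpha> \<tau>" and tb: "\<tau> ` \<beta> \<subseteq> \<beta>"
    and m: "nano_move \<tau> E E'" and ew: "etale_word_over \<alpha> E"
  shows "proj \<beta> E = proj \<beta> E' \<or> nano_move \<tau> (proj \<beta> E) (proj \<beta> E')"
  using m ew
proof cases
  case (move1 A lab x a y)
  show ?thesis
  proof (cases "lab a \<in> \<beta>")
    case True
    have "(A - {a}) \<inter> {a. lab a \<in> \<beta>} = A \<inter> {a. lab a \<in> \<beta>} - {a}" by blast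
    then show ?thesis using True move1
      by (simp add: proj_def nano_move.move1[where x="filter (\<lambda>a. lab a \<in> \<beta>) x", simplified])
  next
    case False
    have "(A - {a}) \<inter> {a. lab a \<in> \<beta>} = A \<inter> {a. lab a \<in> \<beta>}" using False by blast
    then show ?thesis using False move1 by (simp add: proj_def)
  qed
next
  case (move2 a b lab A x y z)
  have aA: "lab a \<in> \<alpha>" using ew move2 by (auto simp: etale_word_over_def)
  have iff: "lab a \<in> \<beta> \<longleftrightarrow> lab b \<in> \<beta>"
  proof
    assume "lab a \<in> \<beta>" then show "lab b \<in> \<beta>" using tb move2 by auto
  next
    assume "lab b \<in> \<beta>"
    then have "\<tau> (lab b) \<in> \<beta>" using tb by auto
    moreover have "\<tau> (lab b) = lab a" using inv aA move2 by (simp add: involution_on_def)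
    ultimately show "lab a \<in> \<beta>" by simp
  qed
  show ?thesis
  proof (cases "lab a \<in> \<beta>")
    case True
    have "(A - {a, b}) \<inter> {a. lab a \<in> \<beta>} = A \<inter> {a. lab a \<in> \<beta>} - {a, b}" by blast
    then show ?thesis using True iff move2
      by (simp add: proj_def nano_move.move2[where x="filter (\<lambda>a. lab a \<in> \<beta>) x", simplified])
  next
    case False
    have "(A - {a, b}) \<inter> {a. lab a \<in> \<beta>} = A \<inter> {a. lab a \<in> \<beta>}" using False iff by blast
    then show ?thesis using False iff move2 by (simp add: proj_def)
  qed
next
  case (move3 a b c lab A x y z u)
  show ?thesis
  proof (cases "lab a \<in> \<beta>")
    case True
    then show ?thesis using move3
      by (simp add: proj_def nano_move.move3[where x="filter (\<lambda>a. lab a \<in> \<beta>) x", simplified])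
  next
    case False
    then show ?thesis using move3 by (simp add: proj_def)
  qed
qed

lemma proj_nano:
  assumes "nanoword_over \<alpha> E"
  shows "nanoword_over \<beta> (proj \<beta> E)"
proof -
  obtain A lab w where E: "E = (A, lab, w)" by (cases E) auto
  have fin: "finite A" and sw: "set w \<subseteq> A" and c: "\<forall>a\<in>A. count_list w a = 2"
    using assms E by (auto simp: nanoword_over_def etale_word_over_def)
  have "\<forall>a\<in>A \<inter> {a. lab a \<in> \<beta>}. count_list (filter (\<lambda>a. lab a \<in> \<beta>) w) a = 2"
  proof
    fix a assume a: "a \<in> A \<inter> {a. lab a \<in> \<beta>}"
    have "count_list (filter (\<lambda>a. lab a \<in> \<beta>) w) a = count_list w a"
      using a by (induction w) auto
    then show "count_list (filter (\<lambda>a. lab a \<in> \<beta>) w) a = 2" using c a by simp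
  qed
  then show ?thesis using E fin sw
    by (auto simp: proj_def nanoword_over_def etale_word_over_def)
qed

lemma proj_iso:
  assumes "nano_iso E E'" "etale_word_over \<alpha> E"
  shows "nano_iso (proj \<beta> E) (proj \<beta> E')"
proof -
  obtain A lab w where E: "E = (A, lab, w)" by (cases E) auto
  obtain A' lab' w' where E': "E' = (A', lab', w')" by (cases E') auto
  obtain f where b: "bij_betw f A A'" and l: "\<forall>a\<in>A. lab' (f a) = lab a" and ww: "w' = map f w"
    using assms(1) E E' by (auto simp: nano_iso_def)
  have sw: "set w \<subseteq> A" using assms(2) E by (auto simp: etale_word_over_def)
  have b2: "bij_betw f (A \<inter> {a. lab a \<in> \<beta>}) (A' \<inter> {a. lab' a \<in> \<beta>})"
  proof -
    have "f ` (A \<inter> {a. lab a \<in> \<beta>}) = A' \<inter> {a. lab' a \<in> \<beta>}"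
    proof
      show "f ` (A \<inter> {a. lab a \<in> \<beta>}) \<subseteq> A' \<inter> {a. lab' a \<in> \<beta>}"
        using b l by (auto simp: bij_betw_def)
      show "A' \<inter> {a. lab' a \<in> \<beta>} \<subseteq> f ` (A \<inter> {a. lab a \<in> \<beta>})"
      proof
        fix y assume y: "y \<in> A' \<inter> {a. lab' a \<in> \<beta>}"
        then obtain x where "x \<in> A" "y = f x" using b by (auto simp: bij_betw_def)
        then show "y \<in> f ` (A \<inter> {a. lab a \<in> \<beta>})" using y l by auto
      qed
    qed
    moreover have "inj_on f (A \<inter> {a. lab a \<in> \<beta>})"
      using b by (auto simp: bij_betw_def intro: inj_on_subset)
    ultimately show ?thesis by (simp add: bij_betw_def)
  qed
  have "filter (\<lambda>a. lab' a \<in> \<beta>) (map f w) = map f (filter (\<lambda>a. lab a \<in> \<beta>) w)"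
    using sw l by (induction w) auto
  then show ?thesis using b2 l E E' ww by (auto simp: proj_def nano_iso_def)
qed

lemma proj_step:
  assumes inv: "involution_on \<alpha> \<tau>" and tb: "\<tau> ` \<beta> \<subseteq> \<beta>"
    and s: "nano_step \<tau> \<alpha> E E'"
  shows "proj \<beta> E = proj \<beta> E' \<or> nano_step \<tau> \<beta> (proj \<beta> E) (proj \<beta> E')"
proof -
  have n1: "nanoword_over \<alpha> E" and n2: "nanoword_over \<alpha> E'"
    and d: "nano_iso E E' \<or> nano_move \<tau> E E' \<or> nano_move \<tau> E' E"
    using s by (auto simp: nano_step_def)
  have e1: "etale_word_over \<alpha> E" and e2: "etale_word_over \<alpha> E'"
    using n1 n2 by (auto simp: nanoword_over_def)
  have p1: "nanoword_over \<beta> (proj \<beta> E)" and p2: "nanoword_over \<beta> (proj \<beta> E')"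
    using n1 n2 proj_nano by blast+
  from d show ?thesis
  proof (elim disjE)
    assume "nano_iso E E'"
    then show ?thesis using proj_iso[OF _ e1] p1 p2 by (auto simp: nano_step_def)
  next
    assume "nano_move \<tau> E E'"
    then have "proj \<beta> E = proj \<beta> E' \<or> nano_move \<tau> (proj \<beta> E) (proj \<beta> E')"
      using proj_move[OF inv tb _ e1] by blast
    then show ?thesis using p1 p2 by (auto simp: nano_step_def)
  next
    assume "nano_move \<tau> E' E"
    then have "proj \<beta> E' = proj \<beta> E \<or> nano_move \<tau> (proj \<beta> E') (proj \<beta> E)"
      using proj_move[OF inv tb _ e2] by blast
    then show ?thesis using p1 p2 by (auto simp: nano_step_def)
  qed
qed

lemma proj_rtc:
  assumes inv: "involution_on \<alpha> \<tau>" and tb: "\<tau> ` \<beta> \<subseteq> \<beta>"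
    and s: "(nano_step \<tau> \<alpha>)\<^sup>*\<^sup>* E E'"
  shows "(nano_step \<tau> \<beta>)\<^sup>*\<^sup>* (proj \<beta> E) (proj \<beta> E')"
  using s
proof induction
  case base then show ?case by simp
next
  case (step y z)
  from proj_step[OF inv tb step(2)] step(3) show ?case
    by (metis rtranclp.rtrancl_into_rtrancl)
qed

lemma proj_id:
  assumes "etale_word_over \<beta> E" shows "proj \<beta> E = E"
proof -
  obtain A lab w where E: "E = (A, lab, w)" by (cases E) auto
  have "lab ` A \<subseteq> \<beta>" "set w \<subseteq> A" using assms E by (auto simp: etale_word_over_def)
  then have "A \<inter> {a. lab a \<in> \<beta>} = A" "filter (\<lambda>a. lab a \<in> \<beta>) w = w"
    by (auto simp: filter_id_conv)
  then show ?thesis using E by (simp add: proj_def)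
qed

lemma desing_over:
  assumes "etale_word_over \<beta> E" shows "etale_word_over \<beta> (desing E)"
proof -
  obtain A lab w where E: "E = (A, lab, w)" by (cases E) auto
  have la: "lab ` A \<subseteq> \<beta>" and sw: "set w \<subseteq> A" using assms E by (auto simp: etale_word_over_def)
  have "set (desing_word w) \<subseteq> {(a, i, j) | a i j. a \<in> A \<and> 1 \<le> i \<and> i < j \<and> j \<le> count_list w a}"
  proof
    fix p assume "p \<in> set (desing_word w)"
    then obtain k where k: "k < length w" and
      p: "p \<in> set (let a = w ! k; i = count_list (take k w) a + 1; m = count_list w a in
      if m \<ge> 2 then map (\<lambda>h. (a, h, i)) [1..<i] @ map (\<lambda>h. (a, i, h)) [Suc i..<Suc m]
      else [])"
      unfolding desing_word_def by auto
    define a where "a = w ! k"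
    define i where "i = count_list (take k w) a + 1"
    have aA: "a \<in> A" using k sw a_def by auto
    have "count_list (take k w) a + 1 \<le> count_list w a"
    proof -
      have "w = take k w @ [a] @ drop (Suc k) w" using k a_def
        by (metis append_Cons append_Nil id_take_nth_drop)
      then have "count_list w a = count_list (take k w) a + 1 + count_list (drop (Suc k) w) a"
        by (metis count_list_append count_list.simps(1) count_list.simps(2) add.right_neutral add.assoc)
      then show ?thesis by simp
    qed
    then have im: "i \<le> count_list w a" using i_def by simp
    show "p \<in> {(a, i, j) | a i j. a \<in> A \<and> 1 \<le> i \<and> i < j \<and> j \<le> count_list w a}"
      using p aA im unfolding a_def[symmetric] i_def[symmetric] Let_def
      by (auto split: if_splits simp: i_def)
  qed
  then show ?thesis using E la by (auto simp: desing_def etale_word_over_def)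
qed

theorem lemma3p3:
  fixes \<alpha> \<beta> :: "'a set" and \<tau> :: "'a \<Rightarrow> 'a" and E1 E2 :: "('l, 'a) etale"
  assumes "involution_on \<alpha> \<tau>"
    and "\<beta> \<subseteq> \<alpha>"
    and "\<tau> ` \<beta> \<subseteq> \<beta>"
    and "etale_word_over \<beta> E1"
    and "etale_word_over \<beta> E2"
    and "etale_homotopic \<tau> \<alpha> E1 E2"
  shows "etale_homotopic \<tau> \<beta> E1 E2"
proof -
  have "(nano_step \<tau> \<beta>)\<^sup>*\<^sup>* (proj \<beta> (desing E1)) (proj \<beta> (desing E2))"
    using proj_rtc[OF assms(1) assms(3)] assms(6)
    by (simp add: etale_homotopic_def nano_homotopic_def)
  then show ?thesis
    using proj_id[OF desing_over[OF assms(4)]] proj_id[OF desing_over[OF assms(5)]]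
    by (simp add: etale_homotopic_def nano_homotopic_def)
qed

end
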